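(* Let $V \subset \mathbb{R}^2$ be a finite point set in general position and $m$ a positive integer. Then $\mathcal{H}(V,\mathcal{R}_{\rm NW},m)$ admits a $2$-shallow hitting set $X$ whose points $x_1,\ldots,x_n$ have decreasing $x$-coordinates and decreasing $y$-coordinates, and such that (i) $x_1$ is the leftmost point among the $m$ topmost points of $V$; (ii) the hyperedge consisting of the $m$ topmost points of $V$ contains exactly one point of $X$; (iii) for any two consecutive points $x_j, x_{j+1}$, the bottomless rectangle $B_j = \{(x,y) : x(x_{j+1}) \leq x \leq x(x_j),\ y \leq y(x_j)\}$ (top-right corner $x_j$, with $x_{j+1}$ on its left side) satisfies $|B_j \cap V| \geq m+1$; and (iv) for any three consecutive points $x_j,x_{j+1},x_{j+2}$, the axis-aligned rectangle $R_j$ with top-right corner $x_j$ and bottom-left corner $x_{j+2}$ satisfies $|R_j \cap V| \geq m+2$.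
   Context: $\mathcal{R}_{\rm NW} = \{\{(x,y) : x \leq a,\ y \geq b\} : a,b \in \mathbb{R}\}$ is the family of north-west quadrants. $\mathcal{H}(V,\mathcal{R},m)$ is the hypergraph on $V$ whose hyperedges are the sets $V \cap R$, $R \in \mathcal{R}$, of size exactly $m$. General position: pairwise distinct $x$-coordinates, $y$-coordinates and values $x+y$. For a point $p$, $x(p)$ and $y(p)$ are its coordinates. A set $X \subseteq V$ is a $t$-shallow hitting set of a hypergraph on $V$ if every hyperedge contains at least one and at most $t$ points of $X$. *)

theory Defs
  imports Complex_Main
begin

type_synonym pt = "real \<times> real"

definition nw_quad :: "real \<Rightarrow> real \<Rightarrow> pt set" where
  "nw_quad a b = {p. fst p \<le> a \<and> snd p \<ge> b}"

definition nw_hyperedges :: "pt set \<Rightarrow> nat \<Rightarrow> pt set set" where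
  "nw_hyperedges V m = {V \<inter> nw_quad a b | a b. card (V \<inter> nw_quad a b) = m}"

definition shallow_hitting_set :: "nat \<Rightarrow> pt set \<Rightarrow> pt set set \<Rightarrow> pt set \<Rightarrow> bool" where
  "shallow_hitting_set t V H X \<longleftrightarrow> X \<subseteq> V \<and>
     (\<forall>e\<in>H. 1 \<le> card (e \<inter> X) \<and> card (e \<inter> X) \<le> t)"

definition general_position :: "pt set \<Rightarrow> bool" where
  "general_position V \<longleftrightarrow> inj_on fst V \<and> inj_on snd V \<and> inj_on (\<lambda>p. fst p + snd p) V"

definition topmost :: "pt set \<Rightarrow> nat \<Rightarrow> pt set" where
  "topmost V m = {p \<in> V. card {q \<in> V. snd p < snd q} < m}"

definition bottomless :: "pt \<Rightarrow> pt \<Rightarrow> pt set" where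
  "bottomless p q = {z. fst q \<le> fst z \<and> fst z \<le> fst p \<and> snd z \<le> snd p}"

definition rect :: "pt \<Rightarrow> pt \<Rightarrow> pt set" where
  "rect p q = {z. fst q \<le> fst z \<and> fst z \<le> fst p \<and> snd q \<le> snd z \<and> snd z \<le> snd p}"

end

theory Submission
  imports Defs
begin

lemma ex_min_on:
  fixes f :: "'a \<Rightarrow> 'b::linorder"
  assumes "finite A" "A \<noteq> {}"
  shows "\<exists>x\<in>A. \<forall>y\<in>A. f x \<le> f y"
proof -
  have "Min (f ` A) \<in> f ` A" using assms by (intro Min_in) auto
  then obtain x where x: "x \<in> A" "f x = Min (f ` A)" by auto
  have "\<forall>y\<in>A. f x \<le> f y"
  proof
    fix y assume "y \<in> A"
    then have "f y \<in> f ` A" by simp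
    then show "f x \<le> f y" unfolding x(2) using assms by (intro Min_le) auto
  qed
  then show ?thesis using x(1) by blast
qed

lemma ex_max_on:
  fixes f :: "'a \<Rightarrow> 'b::linorder"
  assumes "finite A" "A \<noteq> {}"
  shows "\<exists>x\<in>A. \<forall>y\<in>A. f y \<le> f x"
proof -
  have "Max (f ` A) \<in> f ` A" using assms by (intro Max_in) auto
  then obtain x where x: "x \<in> A" "f x = Max (f ` A)" by auto
  have "\<forall>y\<in>A. f y \<le> f x"
  proof
    fix y assume "y \<in> A"
    then have "f y \<in> f ` A" by simp
    then show "f y \<le> f x" unfolding x(2) using assms by (intro Max_ge) auto
  qed
  then show ?thesis using x(1) by blast
qed

lemma top_subset:
  fixes S :: "pt set"
  assumes "finite S" "inj_on snd S"
  shows "k \<le> card S \<Longrightarrow> \<exists>T\<subseteq>S. card T = k \<and> (\<forall>s\<in>S-T. \<forall>t\<in>T. snd s < snd t)"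
proof (induction k)
  case 0
  then show ?case by auto
next
  case (Suc k)
  then obtain T where T: "T \<subseteq> S" "card T = k" "\<forall>s\<in>S-T. \<forall>t\<in>T. snd s < snd t" by auto
  have "S - T \<noteq> {}" using T Suc.prems by auto
  then obtain u where u: "u \<in> S - T" "\<forall>v\<in>S-T. snd v \<le> snd u"
    using ex_max_on[of "S - T" snd] assms by auto
  have fT: "finite T" using T assms finite_subset by auto
  have "insert u T \<subseteq> S" using T u by auto
  moreover have "card (insert u T) = Suc k" using fT u T by auto
  moreover have "\<forall>s\<in>S - insert u T. \<forall>t\<in>insert u T. snd s < snd t"
  proof (intro ballI)
    fix s t assume s: "s \<in> S - insert u T" and t: "t \<in> insert u T"
    show "snd s < snd t"
    proof (cases "t = u")
      case True
      have "snd s \<le> snd u" using u s by auto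
      moreover have "snd s \<noteq> snd u" using assms(2) s u unfolding inj_on_def by blast
      ultimately show ?thesis using True by auto
    next
      case False then show ?thesis using T s t by auto
    qed
  qed
  ultimately show ?case by blast
qed

lemma top_is_topmost:
  assumes "finite S" "T \<subseteq> S" "card T = m" "\<forall>s\<in>S-T. \<forall>t\<in>T. snd s < snd t"
  shows "topmost S m = T"
proof
  show "topmost S m \<subseteq> T"
  proof
    fix p assume p: "p \<in> topmost S m"
    show "p \<in> T"
    proof (rule ccontr)
      assume "p \<notin> T"
      moreover have "p \<in> S" using p unfolding topmost_def by blast
      ultimately have sub: "T \<subseteq> {q \<in> S. snd p < snd q}" using assms(2,4) by blast
      have fin: "finite {q \<in> S. snd p < snd q}" using assms(1) by simp
      have "m \<le> card {q \<in> S. snd p < snd q}" using card_mono[OF fin sub] assms(3) by simp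
      then show False using p unfolding topmost_def by simp
    qed
  qed
next
  show "T \<subseteq> topmost S m"
  proof
    fix p assume p: "p \<in> T"
    have sub: "{q \<in> S. snd p < snd q} \<subseteq> T - {p}"
    proof
      fix q assume q: "q \<in> {q \<in> S. snd p < snd q}"
      have "q \<in> T"
      proof (rule ccontr)
        assume "q \<notin> T"
        then have "snd q < snd p" using q p assms(4) by blast
        then show False using q by simp
      qed
      moreover have "q \<noteq> p" using q by auto
      ultimately show "q \<in> T - {p}" by blast
    qed
    have finT: "finite T" using assms(1,2) finite_subset by blast
    have "card {q \<in> S. snd p < snd q} \<le> card (T - {p})"
      using card_mono[OF _ sub] finT by simp
    also have "\<dots> < m" using card_Diff1_less[OF finT p] assms(3) by simp
    finally have c: "card {q \<in> S. snd p < snd q} < m" .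
    have "p \<in> S" using p assms(2) by blast
    then show "p \<in> topmost S m" unfolding topmost_def using c by (intro CollectI conjI)
  qed
qed
definition R :: "pt \<Rightarrow> pt \<Rightarrow> bool" where
  "R = (\<lambda>p q. fst q < fst p \<and> snd q < snd p)"

lemma chain:
  assumes fin: "finite V" and ifst: "inj_on fst V" and isnd: "inj_on snd V" and m: "0 < m"
  shows "p \<in> V \<Longrightarrow> (\<forall>q\<in>V. fst q < fst p \<longrightarrow> snd q < snd p) \<Longrightarrow>
    \<exists>xs. xs \<noteq> [] \<and> hd xs = p \<and> set xs \<subseteq> V \<and> sorted_wrt R xs \<and>
     (\<forall>j. j + 1 < length xs \<longrightarrow> card (V \<inter> bottomless (xs ! j) (xs ! (j + 1))) \<ge> m + 1) \<and>
     (\<forall>j. j + 2 < length xs \<longrightarrow> card (V \<inter> rect (xs ! j) (xs ! (j + 2))) \<ge> m + 2) \<and>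
     (\<forall>a b. a < fst p \<longrightarrow> card (V \<inter> nw_quad a b) = m \<longrightarrow> set (tl xs) \<inter> nw_quad a b \<noteq> {})"
proof (induction "card {q\<in>V. fst q < fst p}" arbitrary: p rule: less_induct)
  case less
  define L where "L = {q\<in>V. fst q < fst p}"
  have finL: "finite L" using fin L_def by auto
  show ?case
  proof (cases "card L < m")
    case True
    have "\<forall>a b. a < fst p \<longrightarrow> card (V \<inter> nw_quad a b) = m \<longrightarrow> False"
    proof (intro allI impI)
      fix a b assume a: "a < fst p" and c: "card (V \<inter> nw_quad a b) = m"
      have "V \<inter> nw_quad a b \<subseteq> L" using a unfolding L_def nw_quad_def by auto
      then have "card (V \<inter> nw_quad a b) \<le> card L" using finL card_mono by auto
      then show False using c True by auto
    qed
    then show ?thesis using less.prems by (intro exI[of _ "[p]"]) auto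
  next
    case False
    obtain T where T: "T \<subseteq> L" "card T = m" "\<forall>s\<in>L-T. \<forall>t\<in>T. snd s < snd t"
      using top_subset[of L m] finL isnd False unfolding L_def
      by (metis (no_types, lifting) inj_on_subset linorder_not_less mem_Collect_eq subsetI)
    have finT: "finite T" using T finL finite_subset by auto
    have "T \<noteq> {}" using T m by auto
    then obtain p' where p': "p' \<in> T" "\<forall>t\<in>T. fst p' \<le> fst t"
      using ex_min_on[of T fst] finT by auto
    have p'V: "p' \<in> V" and p'p: "fst p' < fst p" using p' T unfolding L_def by auto
    have inv': "\<forall>q\<in>V. fst q < fst p' \<longrightarrow> snd q < snd p'"
    proof (intro ballI impI)
      fix q assume q: "q \<in> V" "fst q < fst p'"
      then have "q \<in> L" "q \<notin> T" using p'p p' unfolding L_def by auto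
      then show "snd q < snd p'" using T p' by auto
    qed
    have sub: "{q\<in>V. fst q < fst p'} \<subset> L" using p'p p'V unfolding L_def by auto
    then have "card {q\<in>V. fst q < fst p'} < card {q\<in>V. fst q < fst p}"
      using finL psubset_card_mono unfolding L_def by auto
    from less.hyps[OF this p'V inv'] obtain ys where ys:
      "ys \<noteq> []" "hd ys = p'" "set ys \<subseteq> V" "sorted_wrt R ys"
      "\<forall>j. j + 1 < length ys \<longrightarrow> card (V \<inter> bottomless (ys ! j) (ys ! (j + 1))) \<ge> m + 1"
      "\<forall>j. j + 2 < length ys \<longrightarrow> card (V \<inter> rect (ys ! j) (ys ! (j + 2))) \<ge> m + 2"
      "\<forall>a b. a < fst p' \<longrightarrow> card (V \<inter> nw_quad a b) = m \<longrightarrow> set (tl ys) \<inter> nw_quad a b \<noteq> {}"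
      by blast
    obtain t where yst: "ys = p' # t" using ys by (cases ys) auto
    have fys: "\<forall>y\<in>set ys. fst y \<le> fst p'" using ys(4) yst unfolding R_def by auto
    have pT: "p \<notin> T" using T unfolding L_def by auto
    have "\<forall>y\<in>set ys. R p y"
    proof
      fix y assume y: "y \<in> set ys"
      have "y \<in> V" using y ys(3) by blast
      moreover have "fst y \<le> fst p'" using y fys by blast
      ultimately have "y \<in> V" "fst y < fst p" using p'p by auto
      then show "R p y" using less.prems(2) unfolding R_def by auto
    qed
    then have s1: "sorted_wrt R (p # ys)" using ys(4) by simp
    have b1: "\<forall>j. j + 1 < length (p # ys) \<longrightarrow> card (V \<inter> bottomless ((p#ys) ! j) ((p#ys) ! (j + 1))) \<ge> m + 1"
    proof (intro allI impI)
      fix j assume j: "j + 1 < length (p # ys)"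
      show "card (V \<inter> bottomless ((p#ys) ! j) ((p#ys) ! (j + 1))) \<ge> m + 1"
      proof (cases j)
        case 0
        have "T \<subseteq> V \<inter> bottomless p p'"
        proof
          fix q assume q: "q \<in> T"
          then have "q \<in> V" "fst q < fst p" using T unfolding L_def by auto
          moreover have "snd q < snd p" using calculation less.prems(2) by auto
          moreover have "fst p' \<le> fst q" using p' q by auto
          ultimately show "q \<in> V \<inter> bottomless p p'" unfolding bottomless_def by auto
        qed
        moreover have "p \<in> V \<inter> bottomless p p'" using less.prems(1) p'p unfolding bottomless_def by auto
        ultimately have "insert p T \<subseteq> V \<inter> bottomless p p'" by auto
        then have "card (insert p T) \<le> card (V \<inter> bottomless p p')" by (metis card_mono fin finite_Int)
        then show ?thesis using 0 yst pT finT T by auto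
      next
        case (Suc k) then show ?thesis using ys(5) j by auto
      qed
    qed
    have r1: "\<forall>j. j + 2 < length (p # ys) \<longrightarrow> card (V \<inter> rect ((p#ys) ! j) ((p#ys) ! (j + 2))) \<ge> m + 2"
    proof (intro allI impI)
      fix j assume j: "j + 2 < length (p # ys)"
      show "card (V \<inter> rect ((p#ys) ! j) ((p#ys) ! (j + 2))) \<ge> m + 2"
      proof (cases j)
        case 0
        then obtain z t' where t: "t = z # t'" using j yst by (cases t) auto
        have zV: "z \<in> V" using ys(3) yst t by auto
        have zp': "fst z < fst p'" "snd z < snd p'" using ys(4) yst t unfolding R_def by auto
        have zL: "z \<in> L" using zV zp' p'p unfolding L_def by auto
        have zT: "z \<notin> T" using zp' p' by fastforce
        have zt: "\<forall>t\<in>T. snd z < snd t" using T zL zT by auto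
        have zp: "snd z < snd p" using less.prems zV zp' p'p by auto
        have "T \<subseteq> V \<inter> rect p z"
        proof
          fix q assume q: "q \<in> T"
          then have "q \<in> V" "fst q < fst p" using T unfolding L_def by auto
          moreover have "snd q < snd p" using calculation less.prems(2) by auto
          moreover have "fst p' \<le> fst q" using p' q by auto
          moreover have "snd z < snd q" using zt q by auto
          ultimately show "q \<in> V \<inter> rect p z" using zp' unfolding rect_def by auto
        qed
        moreover have "p \<in> V \<inter> rect p z" using less.prems(1) p'p zp zp' unfolding rect_def by auto
        moreover have "z \<in> V \<inter> rect p z" using zV p'p zp zp' unfolding rect_def by auto
        ultimately have "insert p (insert z T) \<subseteq> V \<inter> rect p z" by auto
        then have "card (insert p (insert z T)) \<le> card (V \<inter> rect p z)" by (metis card_mono fin finite_Int)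
        moreover have "p \<noteq> z" using zp by auto
        ultimately show ?thesis using 0 yst t pT zT finT T by auto
      next
        case (Suc k) then show ?thesis using ys(6) j by auto
      qed
    qed
    have h1: "\<forall>a b. a < fst p \<longrightarrow> card (V \<inter> nw_quad a b) = m \<longrightarrow> set (tl (p#ys)) \<inter> nw_quad a b \<noteq> {}"
    proof (intro allI impI)
      fix a b assume a: "a < fst p" and c: "card (V \<inter> nw_quad a b) = m"
      show "set (tl (p#ys)) \<inter> nw_quad a b \<noteq> {}"
      proof (cases "a < fst p'")
        case True
        then have "set (tl ys) \<inter> nw_quad a b \<noteq> {}" using ys(7) c by blast
        then show ?thesis using yst by auto
      next
        case F1: False
        show ?thesis
        proof (cases "b \<le> snd p'")
          case True
          then have "p' \<in> nw_quad a b" using F1 unfolding nw_quad_def by auto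
          then show ?thesis using yst by auto
        next
          case False
          have "V \<inter> nw_quad a b \<subseteq> T - {p'}"
          proof
            fix q assume q: "q \<in> V \<inter> nw_quad a b"
            then have qL: "q \<in> L" using a unfolding nw_quad_def L_def by auto
            have "snd p' < snd q" using q False unfolding nw_quad_def by auto
            moreover have "q \<in> T"
            proof (rule ccontr)
              assume "q \<notin> T"
              then have "snd q < snd p'" using T(3) qL p'(1) by blast
              then show False using \<open>snd p' < snd q\<close> by auto
            qed
            ultimately show "q \<in> T - {p'}" by auto
          qed
          then have "card (V \<inter> nw_quad a b) \<le> card (T - {p'})" using finT card_mono by blast
          also have "\<dots> < m" using card_Diff1_less[OF finT p'(1)] T(2) by simp
          finally show ?thesis using c by auto
        qed
      qed
    qed
    show ?thesis
      apply (rule exI[of _ "p # ys"])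
      apply (intro conjI)
            apply simp
           apply simp
      using ys(3) less.prems(1) apply simp
         apply (fact s1)
        apply (fact b1)
       apply (fact r1)
      apply (fact h1)
      done
  qed
qed

lemma at_most_two:
  assumes "finite V" "card (V \<inter> nw_quad a b) = m"
  shows "sorted_wrt R xs \<Longrightarrow> set xs \<subseteq> V \<Longrightarrow>
    (\<forall>j. j + 2 < length xs \<longrightarrow> card (V \<inter> rect (xs ! j) (xs ! (j + 2))) \<ge> m + 2) \<Longrightarrow>
    card (set xs \<inter> nw_quad a b) \<le> 2"
proof (induction xs)
  case Nil
  then show ?case by auto
next
  case (Cons p ys)
  have ih: "card (set ys \<inter> nw_quad a b) \<le> 2"
  proof (rule Cons.IH)
    show "sorted_wrt R ys" "set ys \<subseteq> V" using Cons.prems by auto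
    show "\<forall>j. j + 2 < length ys \<longrightarrow> m + 2 \<le> card (V \<inter> rect (ys ! j) (ys ! (j + 2)))"
    proof (intro allI impI)
      fix j assume "j + 2 < length ys"
      then show "m + 2 \<le> card (V \<inter> rect (ys ! j) (ys ! (j + 2)))"
        using Cons.prems(3) by (metis Suc_eq_plus1 add_Suc length_Cons nth_Cons_Suc Suc_less_eq)
    qed
  qed
  show ?case
  proof (cases "p \<in> nw_quad a b")
    case False
    then have "set (p # ys) \<inter> nw_quad a b = set ys \<inter> nw_quad a b" by auto
    then show ?thesis using ih by simp
  next
    case True
    show ?thesis
    proof (cases ys)
      case Nil
      then show ?thesis by (auto intro: order_trans[OF card_mono[of "{p}"]])
    next
      case (Cons h t)
      have "set t \<inter> nw_quad a b = {}"
      proof (rule ccontr)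
        assume "set t \<inter> nw_quad a b \<noteq> {}"
        then obtain y where y: "y \<in> set t" "y \<in> nw_quad a b" by auto
        then obtain z t' where t: "t = z # t'" by (cases t) auto
        have sz: "snd y \<le> snd z" using y t Cons Cons.prems(1) unfolding R_def by auto
        have zp: "fst z < fst p" "snd z < snd p" using Cons.prems(1) Cons t unfolding R_def by auto
        have "rect p z \<subseteq> nw_quad a b"
          using True y sz unfolding rect_def nw_quad_def by auto
        then have "card (V \<inter> rect p z) \<le> m"
          using assms card_mono[of "V \<inter> nw_quad a b"] by (metis Int_mono finite_Int order_refl)
        moreover have "card (V \<inter> rect p z) \<ge> m + 2"
          using Cons.prems(3)[rule_format, of 0] Cons t by auto
        ultimately show False by auto
      qed
      then have "set (p # ys) \<inter> nw_quad a b \<subseteq> {p, h}" using Cons by auto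
      then have "card (set (p # ys) \<inter> nw_quad a b) \<le> card {p, h}" by (intro card_mono) auto
      also have "\<dots> \<le> 2" by (simp add: card_insert_if)
      finally show ?thesis .
    qed
  qed
qed

theorem lemma14:
  fixes V :: "pt set" and m :: nat
  assumes "finite V" and "general_position V" and "0 < m" and "m \<le> card V"
  shows "\<exists>xs :: pt list.
     shallow_hitting_set 2 V (nw_hyperedges V m) (set xs) \<and>
     sorted_wrt (\<lambda>p q. fst q < fst p \<and> snd q < snd p) xs \<and>
     xs \<noteq> [] \<and>
     hd xs \<in> topmost V m \<and> (\<forall>q\<in>topmost V m. fst (hd xs) \<le> fst q) \<and>
     card (topmost V m \<inter> set xs) = 1 \<and>
     (\<forall>j. j + 1 < length xs \<longrightarrow> card (V \<inter> bottomless (xs ! j) (xs ! (j + 1))) \<ge> m + 1) \<and>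
     (\<forall>j. j + 2 < length xs \<longrightarrow> card (V \<inter> rect (xs ! j) (xs ! (j + 2))) \<ge> m + 2)"
proof -
  have ifst: "inj_on fst V" and isnd: "inj_on snd V"
    using assms(2) unfolding general_position_def by auto
  obtain T where T: "T \<subseteq> V" "card T = m" "\<forall>s\<in>V-T. \<forall>t\<in>T. snd s < snd t"
    using top_subset[OF assms(1) isnd assms(4)] by auto
  have top: "topmost V m = T" using top_is_topmost[OF assms(1) T] .
  have finT: "finite T" using T assms(1) finite_subset by auto
  have "T \<noteq> {}" using T assms(3) by auto
  then obtain x1 where x1: "x1 \<in> T" "\<forall>t\<in>T. fst x1 \<le> fst t"
    using ex_min_on[of T fst] finT by auto
  have x1V: "x1 \<in> V" using x1 T by auto
  have inv: "\<forall>q\<in>V. fst q < fst x1 \<longrightarrow> snd q < snd x1"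
  proof (intro ballI impI)
    fix q assume q: "q \<in> V" "fst q < fst x1"
    then have "q \<notin> T" using x1(2) by (meson not_le)
    then show "snd q < snd x1" using T q x1 by auto
  qed
  obtain xs where xs: "xs \<noteq> []" "hd xs = x1" "set xs \<subseteq> V" "sorted_wrt R xs"
      "\<forall>j. j + 1 < length xs \<longrightarrow> card (V \<inter> bottomless (xs ! j) (xs ! (j + 1))) \<ge> m + 1"
      "\<forall>j. j + 2 < length xs \<longrightarrow> card (V \<inter> rect (xs ! j) (xs ! (j + 2))) \<ge> m + 2"
      "\<forall>a b. a < fst x1 \<longrightarrow> card (V \<inter> nw_quad a b) = m \<longrightarrow> set (tl xs) \<inter> nw_quad a b \<noteq> {}"
    using chain[OF assms(1) ifst isnd assms(3) x1V inv] by blast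
  obtain t where xst: "xs = x1 # t" using xs by (cases xs) auto
  have hit: "shallow_hitting_set 2 V (nw_hyperedges V m) (set xs)"
    unfolding shallow_hitting_set_def
  proof (intro conjI ballI)
    show "set xs \<subseteq> V" by (fact xs(3))
  next
    fix e assume "e \<in> nw_hyperedges V m"
    then obtain a b where e: "e = V \<inter> nw_quad a b" "card (V \<inter> nw_quad a b) = m"
      unfolding nw_hyperedges_def by auto
    have "e \<inter> set xs \<noteq> {}"
    proof (cases "a < fst x1")
      case True
      then obtain y where "y \<in> set (tl xs)" "y \<in> nw_quad a b" using xs(7) e by blast
      then show ?thesis using e xs(3) xst by auto
    next
      case F1: False
      show ?thesis
      proof (cases "b \<le> snd x1")
        case True
        then show ?thesis using F1 e x1V xst unfolding nw_quad_def by auto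
      next
        case False
        have "V \<inter> nw_quad a b \<subseteq> T - {x1}"
        proof
          fix q assume q: "q \<in> V \<inter> nw_quad a b"
          have "snd x1 < snd q" using q False unfolding nw_quad_def by auto
          moreover have "q \<in> T"
          proof (rule ccontr)
            assume "q \<notin> T"
            then have "snd q < snd x1" using T(3) q x1(1) by blast
            then show False using \<open>snd x1 < snd q\<close> by simp
          qed
          ultimately show "q \<in> T - {x1}" by auto
        qed
        then have "card (V \<inter> nw_quad a b) \<le> card (T - {x1})" using finT by (intro card_mono) auto
        also have "\<dots> < m" using card_Diff1_less[OF finT x1(1)] T(2) by simp
        finally show ?thesis using e by auto
      qed
    qed
    then show "1 \<le> card (e \<inter> set xs)" by (simp add: Suc_leI card_gt_0_iff)
    have "e \<inter> set xs = set xs \<inter> nw_quad a b" using e(1) xs(3) by blast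
    then show "card (e \<inter> set xs) \<le> 2"
      using at_most_two[OF assms(1) e(2) xs(4) xs(3) xs(6)] by simp
  qed
  have one: "topmost V m \<inter> set xs = {x1}"
  proof -
    have "\<forall>y\<in>set t. fst y < fst x1" using xs(4) xst unfolding R_def by auto
    then have "\<forall>y\<in>set t. y \<notin> T" using x1(2) by (meson not_le)
    then show ?thesis unfolding top using xst x1(1) by auto
  qed
  have s: "sorted_wrt (\<lambda>p q. fst q < fst p \<and> snd q < snd p) xs" using xs(4) unfolding R_def .
  have c1: "card (topmost V m \<inter> set xs) = 1" unfolding one by simp
  have h: "hd xs \<in> topmost V m" "\<forall>q\<in>topmost V m. fst (hd xs) \<le> fst q"
    unfolding top xs(2) using x1 by auto
  show ?thesis
    apply (rule exI[of _ xs])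
    apply (intro conjI)
           apply (fact hit)
          apply (fact s)
         apply (fact xs(1))
        apply (fact h(1))
       apply (fact h(2))
      apply (fact c1)
     apply (fact xs(5))
    apply (fact xs(6))
    done
qed

end
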